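(* Let $R$ be a commutative Noetherian ring with unity. The vertex set of $\Gamma_E(R)$ is infinite if and only if there exists $x\in R$ such that $\operatorname{ann}(x)$ is a maximal element of $\mathfrak F=\{\operatorname{ann}(z)\mid 0\neq z\in R\}$ (so $\operatorname{ann}(x)$ is an associated prime of $R$) and $\deg[x]=\infty$.
   Context: For $x,y\in R$ write $x\sim y$ iff $\operatorname{ann}(x)=\operatorname{ann}(y)$; $[x]$ denotes the equivalence class of $x$. Let $Z^*(R)$ be the set of nonzero zero divisors of $R$. The graph $\Gamma_E(R)$ is the simple graph whose vertices are the classes $[x]$ with $x\in Z^*(R)$, two distinct vertices $[x],[y]$ being adjacent iff $xy=0$. The degree of a vertex is the number (possibly infinite) of vertices adjacent to it. An associated prime of $R$ is a prime ideal of the form $\operatorname{ann}(y)$, $y\in R$. *)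

theory Defs
  imports "HOL-Algebra.Ring_Divisibility"
begin

definition ann :: "('a, 'b) ring_scheme \<Rightarrow> 'a \<Rightarrow> 'a set" where
  "ann R x = {y \<in> carrier R. x \<otimes>\<^bsub>R\<^esub> y = \<zero>\<^bsub>R\<^esub>}"

definition zdivs :: "('a, 'b) ring_scheme \<Rightarrow> 'a set" where
  "zdivs R = {x \<in> carrier R. x \<noteq> \<zero>\<^bsub>R\<^esub> \<and>
              (\<exists>y \<in> carrier R. y \<noteq> \<zero>\<^bsub>R\<^esub> \<and> x \<otimes>\<^bsub>R\<^esub> y = \<zero>\<^bsub>R\<^esub>)}"

definition ann_class :: "('a, 'b) ring_scheme \<Rightarrow> 'a \<Rightarrow> 'a set" where
  "ann_class R x = {y \<in> carrier R. ann R y = ann R x}"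

definition GE_vertices :: "('a, 'b) ring_scheme \<Rightarrow> 'a set set" where
  "GE_vertices R = ann_class R ` zdivs R"

definition GE_adj :: "('a, 'b) ring_scheme \<Rightarrow> 'a set \<Rightarrow> 'a set \<Rightarrow> bool" where
  "GE_adj R C D \<longleftrightarrow> C \<in> GE_vertices R \<and> D \<in> GE_vertices R \<and> C \<noteq> D \<and>
     (\<exists>x \<in> C. \<exists>y \<in> D. x \<otimes>\<^bsub>R\<^esub> y = \<zero>\<^bsub>R\<^esub>)"

text \<open>The set of neighbours of a vertex; its degree is infinite iff this set is infinite.\<close>
definition GE_neighbours :: "('a, 'b) ring_scheme \<Rightarrow> 'a set \<Rightarrow> 'a set set" where
  "GE_neighbours R C = {D. GE_adj R C D}"

definition ann_family :: "('a, 'b) ring_scheme \<Rightarrow> 'a set set" where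
  "ann_family R = {ann R z | z. z \<in> carrier R \<and> z \<noteq> \<zero>\<^bsub>R\<^esub>}"

definition maximal_in :: "'c set \<Rightarrow> 'c set set \<Rightarrow> bool" where
  "maximal_in I F \<longleftrightarrow> I \<in> F \<and> (\<forall>J \<in> F. I \<subseteq> J \<longrightarrow> J = I)"

end

theory Submission
  imports Defs
begin

lemma (in cring) ann_ideal:
  assumes z: "z \<in> carrier R"
  shows "ideal (ann R z) R"
proof (intro idealI subgroup.intro)
  show "ring R" by (rule ring_axioms)
  show "ann R z \<subseteq> carrier (add_monoid R)" by (auto simp: ann_def)
  show "\<And>x y. x \<in> ann R z \<Longrightarrow> y \<in> ann R z \<Longrightarrow> x \<otimes>\<^bsub>add_monoid R\<^esub> y \<in> ann R z"
    using z by (auto simp: ann_def r_distr)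
  show "\<one>\<^bsub>add_monoid R\<^esub> \<in> ann R z" using z by (auto simp: ann_def)
  show "\<And>x. x \<in> ann R z \<Longrightarrow> inv\<^bsub>add_monoid R\<^esub> x \<in> ann R z"
    using z by (auto simp: ann_def simp flip: a_inv_def) (metis r_minus minus_zero)
  show "\<And>a x. a \<in> ann R z \<Longrightarrow> x \<in> carrier R \<Longrightarrow> x \<otimes> a \<in> ann R z"
    using z by (auto simp: ann_def) (metis m_lcomm r_null)
  show "\<And>a x. a \<in> ann R z \<Longrightarrow> x \<in> carrier R \<Longrightarrow> a \<otimes> x \<in> ann R z"
    using z by (auto simp: ann_def) (metis m_assoc l_null)
qed

lemma (in cring) ann_family_max:
  assumes "noetherian_ring R" and I: "I \<in> ann_family R"
  shows "\<exists>M. maximal_in M (ann_family R) \<and> I \<subseteq> M"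
proof -
  interpret noetherian_ring R by fact
  define A where "A = {J \<in> ann_family R. I \<subseteq> J}"
  have Aid: "A \<subseteq> {J. ideal J R}"
    by (auto simp: A_def ann_family_def intro: ann_ideal)
  have "\<exists>M\<in>A. \<forall>X\<in>A. M \<subseteq> X \<longrightarrow> X = M"
  proof (rule subset_Zorn_nonempty)
    show "A \<noteq> {}" using I by (auto simp: A_def)
    fix C assume "C \<noteq> {}" "subset.chain A C"
    moreover have "subset.chain {J. ideal J R} C"
      using \<open>subset.chain A C\<close> Aid unfolding pred_on.chain_def by blast
    ultimately have "\<Union>C \<in> C" using ideal_chain_is_trivial by blast
    thus "\<Union>C \<in> A" using \<open>subset.chain A C\<close> unfolding pred_on.chain_def by blast
  qed
  then obtain M where "M \<in> A" "\<forall>X\<in>A. M \<subseteq> X \<longrightarrow> X = M" by blast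
  thus ?thesis unfolding maximal_in_def A_def by blast
qed

lemma (in cring) max_prod_zero:
  assumes x: "x \<in> carrier R" and z: "z \<in> carrier R"
    and mx: "maximal_in (ann R x) (ann_family R)"
    and mz: "maximal_in (ann R z) (ann_family R)"
    and ne: "ann R x \<noteq> ann R z"
  shows "x \<otimes> z = \<zero>"
proof (rule ccontr)
  assume h: "x \<otimes> z \<noteq> \<zero>"
  have F: "ann R (x \<otimes> z) \<in> ann_family R" using h x z by (auto simp: ann_family_def)
  have "ann R x \<subseteq> ann R (x \<otimes> z)"
    using x z by (auto simp: ann_def) (metis m_assoc m_comm r_null)
  hence 1: "ann R (x \<otimes> z) = ann R x" using mx F by (auto simp: maximal_in_def)
  have "ann R z \<subseteq> ann R (x \<otimes> z)"
    using x z by (auto simp: ann_def) (metis m_assoc r_null)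
  hence "ann R (x \<otimes> z) = ann R z" using mz F by (auto simp: maximal_in_def)
  with 1 ne show False by simp
qed

lemma (in cring) class_eq:
  assumes "y \<in> carrier R" "ann_class R y = ann_class R x"
  shows "ann R y = ann R x"
  using assms by (auto simp: ann_class_def)

lemma (in cring) adj:
  assumes x: "x \<in> carrier R" and z: "z \<in> carrier R" and "x \<noteq> \<zero>" "z \<noteq> \<zero>"
    and "x \<otimes> z = \<zero>" and "ann R x \<noteq> ann R z"
  shows "GE_adj R (ann_class R x) (ann_class R z)"
proof -
  have "x \<in> zdivs R" using assms by (auto simp: zdivs_def)
  moreover have "z \<in> zdivs R" using assms by (auto simp: zdivs_def m_comm)
  moreover have "ann_class R x \<noteq> ann_class R z" using class_eq[OF x] assms by metis
  moreover have "x \<in> ann_class R x" "z \<in> ann_class R z" using x z by (auto simp: ann_class_def)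
  ultimately show ?thesis using assms unfolding GE_adj_def GE_vertices_def by blast
qed

lemma (in cring) main:
  assumes "noetherian_ring R"
  shows "infinite (GE_vertices R) \<longleftrightarrow>
    (\<exists>x \<in> carrier R. maximal_in (ann R x) (ann_family R) \<and>
                     infinite (GE_neighbours R (ann_class R x)))"
proof
  assume inf: "infinite (GE_vertices R)"
  define M where "M = {I. maximal_in I (ann_family R)}"
  define w where "w I = (SOME z. z \<in> carrier R \<and> z \<noteq> \<zero> \<and> ann R z = I)" for I
  have w: "w I \<in> carrier R \<and> w I \<noteq> \<zero> \<and> ann R (w I) = I" if "I \<in> M" for I
  proof -
    have "\<exists>z. z \<in> carrier R \<and> z \<noteq> \<zero> \<and> ann R z = I"
      using that by (auto simp: M_def maximal_in_def ann_family_def)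
    thus ?thesis unfolding w_def by (rule someI_ex)
  qed
  show "\<exists>x \<in> carrier R. maximal_in (ann R x) (ann_family R) \<and>
                     infinite (GE_neighbours R (ann_class R x))"
  proof (cases "finite M")
    case False
    then obtain I0 where I0: "I0 \<in> M" by (metis finite.emptyI ex_in_conv)
    define x where "x = w I0"
    have x: "x \<in> carrier R" "x \<noteq> \<zero>" "ann R x = I0" using w[OF I0] x_def by auto
    define Z where "Z = w ` (M - {I0})"
    have sub: "ann_class R ` Z \<subseteq> GE_neighbours R (ann_class R x)"
    proof
      fix C assume "C \<in> ann_class R ` Z"
      then obtain I where I: "I \<in> M" "I \<noteq> I0" "C = ann_class R (w I)" by (auto simp: Z_def)
      have "x \<otimes> w I = \<zero>"
        using max_prod_zero[of x "w I"] x w[OF I(1)] I I0 by (auto simp: M_def)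
      thus "C \<in> GE_neighbours R (ann_class R x)"
        using adj[of x "w I"] x w[OF I(1)] I unfolding GE_neighbours_def by auto
    qed
    have "ann R ` Z = M - {I0}" using w by (force simp: Z_def)
    hence "infinite (ann R ` Z)" using False by simp
    moreover have "ann R ` Z = (\<lambda>C. ann R (SOME y. y \<in> C)) ` (ann_class R ` Z)"
    proof -
      have "ann R (SOME y. y \<in> ann_class R z) = ann R z" if "z \<in> Z" for z
      proof -
        have "z \<in> carrier R" using that w by (auto simp: Z_def)
        hence "z \<in> ann_class R z" by (auto simp: ann_class_def)
        hence "(SOME y. y \<in> ann_class R z) \<in> ann_class R z" by (rule someI)
        thus ?thesis by (auto simp: ann_class_def)
      qed
      thus ?thesis by (auto simp: image_image intro!: image_cong)
    qed
    ultimately have "infinite (ann_class R ` Z)" by (metis finite_imageI)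
    hence "infinite (GE_neighbours R (ann_class R x))" using sub finite_subset by blast
    moreover have "maximal_in (ann R x) (ann_family R)" using x I0 by (simp add: M_def)
    ultimately show ?thesis using x by blast
  next
    case True
    have cover: "GE_vertices R \<subseteq> (\<Union>I\<in>M. insert (ann_class R (w I)) (GE_neighbours R (ann_class R (w I))))"
    proof
      fix C assume "C \<in> GE_vertices R"
      then obtain y where y: "y \<in> zdivs R" "C = ann_class R y" by (auto simp: GE_vertices_def)
      then obtain u where u: "y \<in> carrier R" "y \<noteq> \<zero>" "u \<in> carrier R" "u \<noteq> \<zero>" "y \<otimes> u = \<zero>"
        by (auto simp: zdivs_def)
      have "y \<in> ann R u" using u by (auto simp: ann_def m_comm)
      moreover have "ann R u \<in> ann_family R" using u by (auto simp: ann_family_def)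
      then obtain I where I: "maximal_in I (ann_family R)" "ann R u \<subseteq> I"
        using ann_family_max[OF assms(1)] by blast
      ultimately have IM: "I \<in> M" and yI: "y \<in> I" using I by (auto simp: M_def)
      note wI = w[OF IM]
      have p: "w I \<otimes> y = \<zero>" using yI wI by (auto simp: ann_def)
      show "C \<in> (\<Union>I\<in>M. insert (ann_class R (w I)) (GE_neighbours R (ann_class R (w I))))"
      proof (cases "ann R (w I) = ann R y")
        case True
        hence "C = ann_class R (w I)" using y by (auto simp: ann_class_def)
        thus ?thesis using IM by blast
      next
        case False
        hence "GE_adj R (ann_class R (w I)) C" using adj[of "w I" y] wI u p y by auto
        thus ?thesis using IM unfolding GE_neighbours_def by blast
      qed
    qed
    obtain I where IM: "I \<in> M" and "infinite (GE_neighbours R (ann_class R (w I)))"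
      using finite_subset[OF cover] inf True by blast
    thus ?thesis using w[OF IM] unfolding M_def by (metis mem_Collect_eq)
  qed
next
  assume "\<exists>x \<in> carrier R. maximal_in (ann R x) (ann_family R) \<and>
                     infinite (GE_neighbours R (ann_class R x))"
  then obtain x where "infinite (GE_neighbours R (ann_class R x))" by blast
  moreover have "GE_neighbours R (ann_class R x) \<subseteq> GE_vertices R"
    by (auto simp: GE_neighbours_def GE_adj_def)
  ultimately show "infinite (GE_vertices R)" using finite_subset by blast
qed

theorem proposition2p2:
  fixes R :: "('a, 'b) ring_scheme"
  assumes "cring R" and "noetherian_ring R"
  shows "infinite (GE_vertices R) \<longleftrightarrow>
    (\<exists>x \<in> carrier R. maximal_in (ann R x) (ann_family R) \<and>
                     infinite (GE_neighbours R (ann_class R x)))"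
  using cring.main[OF assms(1) assms(2)] .

end
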